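(* Let $X$ be a Hausdorff locally convex topological vector space over $\mathbb{R}$ with continuous dual $X^*$, let $V\subset X$ be compact, let $K\subset\mathbb{R}^d$ be compact, let $m\ge1$, let $G:V\to C(K;\mathbb{R}^m)$ be continuous (with $C(K;\mathbb{R}^m)$ carrying the uniform norm), and let $\sigma\in C(\mathbb{R})$ be a Tauber--Wiener function. Then for every $\varepsilon>0$ there exist an integer $p\ge1$, vectors $\omega_k\in\mathbb{R}^d$ and scalars $\zeta_k\in\mathbb{R}$ ($k=1,\dots,p$) defining the trunk map \[ \mathcal{T}(y)=\bigl(\sigma(\omega_1\cdot y+\zeta_1),\dots,\sigma(\omega_p\cdot y+\zeta_p)\bigr)^T\in\mathbb{R}^p, \] and a branch map $\mathcal{B}:X\to\mathbb{R}^{m\times p}$ whose $p$ columns $b_1,\dots,b_p:X\to\mathbb{R}^m$ are single-hidden-layer topological neural networks on $X$, such that \[ \sup_{u\in V}\ \sup_{y\in K}\bigl\|G(u)(y)-\mathcal{B}(u)\mathcal{T}(y)\bigr\|_{\mathbb{R}^m}<\varepsilon . \]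
   Context: A function $\sigma:\mathbb{R}\to\mathbb{R}$ is a Tauber--Wiener function if the linear span of $\{t\mapsto\sigma(wt-\theta): w,\theta\in\mathbb{R}\}$ is dense in $C([a,b])$ (uniform norm) for every closed interval $[a,b]\subset\mathbb{R}$. A (vector-valued, single-hidden-layer) topological feedforward neural network on $X$ is a map $H:X\to\mathbb{R}^m$ of the form $H(x)=A\,\sigma(T(x))$, where $T(x)=(f_1(x)-\theta_1,\dots,f_r(x)-\theta_r)$ for some $r\ge1$, $f_i\in X^*$, $\theta_i\in\mathbb{R}$, $A\in\mathbb{R}^{m\times r}$, and $\sigma$ acts componentwise on $\mathbb{R}^r$. $\mathcal{B}(u)\mathcal{T}(y)=\sum_{k=1}^p b_k(u)\,t_k(y)$ is the matrix–vector product. $\|\cdot\|_{\mathbb{R}^m}$ is any fixed norm on $\mathbb{R}^m$. *)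

theory Defs
  imports "HOL-Analysis.Analysis"
begin

definition hlc_tvs :: "'a::real_vector topology \<Rightarrow> bool" where
  "hlc_tvs T \<longleftrightarrow>
     topspace T = UNIV \<and>
     continuous_map (prod_topology T T) T (\<lambda>(x, y). x + y) \<and>
     continuous_map (prod_topology euclideanreal T) T (\<lambda>(c, x). c *\<^sub>R x) \<and>
     Hausdorff_space T \<and>
     (\<forall>W. openin T W \<and> 0 \<in> W \<longrightarrow> (\<exists>U. openin T U \<and> convex U \<and> 0 \<in> U \<and> U \<subseteq> W))"

definition tvs_dual :: "'a::real_vector topology \<Rightarrow> ('a \<Rightarrow> real) set" where
  "tvs_dual T = {f. linear f \<and> continuous_map T euclideanreal f}"

definition tauber_wiener :: "(real \<Rightarrow> real) \<Rightarrow> bool" where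
  "tauber_wiener \<sigma> \<longleftrightarrow>
     (\<forall>a b g e. a < b \<and> continuous_on {a..b} g \<and> e > 0 \<longrightarrow>
        (\<exists>(n::nat) c w \<theta>. \<forall>t\<in>{a..b}.
            \<bar>g t - (\<Sum>i<n. c i * \<sigma> (w i * t - \<theta> i))\<bar> < e))"

definition topo_nn :: "'a::real_vector topology \<Rightarrow> (real \<Rightarrow> real) \<Rightarrow> ('a \<Rightarrow> real^'m) \<Rightarrow> bool" where
  "topo_nn T \<sigma> H \<longleftrightarrow>
     (\<exists>(r::nat) f \<theta> (A :: 'm \<Rightarrow> nat \<Rightarrow> real). r \<ge> 1 \<and> (\<forall>i<r. f i \<in> tvs_dual T) \<and>
        (\<forall>x. H x = (\<chi> j. \<Sum>i<r. A j i * \<sigma> (f i x - \<theta> i))))"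

end

theory Submission
  imports Defs
begin

lemma sum_concat:
  "(\<Sum>i<n1+(n2::nat). (if i<n1 then f i else g (i - n1))) = (\<Sum>i<n1. f i) + (\<Sum>i<n2. (g i::'b::comm_monoid_add))"
proof (induction n2)
  case 0
  then show ?case by simp
next
  case (Suc n2)
  then show ?case by (simp add: add.assoc)
qed

inductive_set cosalg :: "('b \<Rightarrow> real) set \<Rightarrow> ('b \<Rightarrow> real) set" for L where
  base: "l \<in> L \<Longrightarrow> (\<lambda>z. a * cos (l z + b)) \<in> cosalg L"
| add: "f \<in> cosalg L \<Longrightarrow> g \<in> cosalg L \<Longrightarrow> (\<lambda>z. f z + g z) \<in> cosalg L"

definition isnet :: "('b \<Rightarrow> real) set \<Rightarrow> (real \<Rightarrow> real) \<Rightarrow> ('b \<Rightarrow> real) \<Rightarrow> bool" where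
  "isnet L \<sigma> h \<longleftrightarrow> (\<exists>(n::nat) c l \<theta>. (\<forall>i<n. l i \<in> L) \<and> h = (\<lambda>z. \<Sum>i<n. c i * \<sigma> (l i z - \<theta> i)))"

lemma isnet_add:
  assumes "isnet L \<sigma> h1" "isnet L \<sigma> h2"
  shows "isnet L \<sigma> (\<lambda>z. h1 z + h2 z)"
proof -
  obtain n1 c1 l1 t1 where 1: "\<forall>i<(n1::nat). l1 i \<in> L" "h1 = (\<lambda>z. \<Sum>i<n1. c1 i * \<sigma> (l1 i z - t1 i))"
    using assms(1) unfolding isnet_def by (elim exE conjE) (rule that; assumption)
  obtain n2 c2 l2 t2 where 2: "\<forall>i<(n2::nat). l2 i \<in> L" "h2 = (\<lambda>z. \<Sum>i<n2. c2 i * \<sigma> (l2 i z - t2 i))"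
    using assms(2) unfolding isnet_def by (elim exE conjE) (rule that; assumption)
  define c where "c i = (if i<n1 then c1 i else c2 (i-n1))" for i
  define l where "l i = (if i<n1 then l1 i else l2 (i-n1))" for i
  define t where "t i = (if i<n1 then t1 i else t2 (i-n1))" for i
  have "\<forall>i<n1+n2. l i \<in> L" using 1 2 by (auto simp: l_def)
  moreover have "(\<lambda>z. h1 z + h2 z) = (\<lambda>z. \<Sum>i<n1+n2. c i * \<sigma> (l i z - t i))"
  proof
    fix z
    have "(\<Sum>i<n1+n2. c i * \<sigma> (l i z - t i)) =
      (\<Sum>i<n1+(n2::nat). (if i<n1 then c1 i * \<sigma> (l1 i z - t1 i) else c2 (i-n1) * \<sigma> (l2 (i-n1) z - t2 (i-n1))))"
      by (rule sum.cong) (auto simp: c_def l_def t_def)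
    also have "\<dots> = h1 z + h2 z" by (subst sum_concat) (simp add: 1 2)
    finally show "h1 z + h2 z = (\<Sum>i<n1+n2. c i * \<sigma> (l i z - t i))" by simp
  qed
  ultimately show ?thesis unfolding isnet_def by blast
qed

lemma isnet_zero: "isnet L \<sigma> (\<lambda>z. 0)"
  unfolding isnet_def by (rule exI[of _ 0]) auto

lemma isnet_sum:
  assumes "\<And>i. i < (n::nat) \<Longrightarrow> isnet L \<sigma> (h i)"
  shows "isnet L \<sigma> (\<lambda>z. \<Sum>i<n. h i z)"
  using assms
proof (induction n)
  case 0 then show ?case by (simp add: isnet_zero)
next
  case (Suc n)
  then show ?case by (simp add: isnet_add)
qed

lemma isnet_single:
  assumes "l \<in> L" shows "isnet L \<sigma> (\<lambda>z. c * \<sigma> (l z - \<theta>))"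
  unfolding isnet_def
  by (rule exI[of _ 1], rule exI[of _ "\<lambda>_. c"], rule exI[of _ "\<lambda>_. l"], rule exI[of _ "\<lambda>_. \<theta>"])
     (use assms in auto)


locale lin_family =
  fixes L :: "('b::t2_space \<Rightarrow> real) set" and S :: "'b set"
  assumes cpt: "compact S"
    and cont: "\<And>l. l \<in> L \<Longrightarrow> continuous_on S l"
    and zero: "(\<lambda>z. 0) \<in> L"
    and ladd: "\<And>l1 l2. l1 \<in> L \<Longrightarrow> l2 \<in> L \<Longrightarrow> (\<lambda>z. l1 z + l2 z) \<in> L"
    and lscale: "\<And>l c. l \<in> L \<Longrightarrow> (\<lambda>z. c * l z) \<in> L"
    and sep: "\<And>x y. x \<in> S \<Longrightarrow> y \<in> S \<Longrightarrow> x \<noteq> y \<Longrightarrow> \<exists>l\<in>L. l x \<noteq> l y"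
begin

lemma cosalg_cont: "f \<in> cosalg L \<Longrightarrow> continuous_on S f"
  by (induction rule: cosalg.induct) (auto intro!: continuous_intros simp: cont)

lemma cosalg_const: "(\<lambda>z. c) \<in> cosalg L"
proof -
  have "(\<lambda>z. c * cos ((\<lambda>z. 0) z + 0)) \<in> cosalg L" by (rule cosalg.base[OF zero])
  then show ?thesis by simp
qed

lemma cosalg_mult_base:
  assumes l: "l \<in> L" and g: "g \<in> cosalg L"
  shows "(\<lambda>z. a * cos (l z + b) * g z) \<in> cosalg L"
  using g
proof (induction rule: cosalg.induct)
  case (base l' a' b')
  have e: "(\<lambda>z. a * cos (l z + b) * (a' * cos (l' z + b'))) =
     (\<lambda>z. (\<lambda>z. (a*a'/2) * cos ((\<lambda>z. l z + (-1) * l' z) z + (b - b'))) z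
        + (\<lambda>z. (a*a'/2) * cos ((\<lambda>z. l z + l' z) z + (b + b'))) z)"
  proof
    fix z
    have "a * cos (l z + b) * (a' * cos (l' z + b')) = a * a' * (cos (l z + b) * cos (l' z + b'))"
      by simp
    also have "\<dots> = a * a' * ((cos ((l z + b) - (l' z + b')) + cos ((l z + b) + (l' z + b'))) / 2)"
      by (simp add: cos_times_cos)
    also have "\<dots> = (a*a'/2) * cos ((l z + (-1) * l' z) + (b - b')) + (a*a'/2) * cos ((l z + l' z) + (b + b'))"
      by (simp add: algebra_simps add_divide_distrib)
    finally show "a * cos (l z + b) * (a' * cos (l' z + b')) =
      (\<lambda>z. (a*a'/2) * cos ((\<lambda>z. l z + (-1) * l' z) z + (b - b'))) z
        + (\<lambda>z. (a*a'/2) * cos ((\<lambda>z. l z + l' z) z + (b + b'))) z" by simp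
  qed
  show ?case unfolding e
    by (intro cosalg.add cosalg.base ladd lscale l base)
next
  case (add f g)
  have e: "(\<lambda>z. a * cos (l z + b) * (f z + g z)) =
     (\<lambda>z. (\<lambda>z. a * cos (l z + b) * f z) z + (\<lambda>z. a * cos (l z + b) * g z) z)"
    by (simp add: algebra_simps)
  show ?case unfolding e by (rule cosalg.add[OF add.IH])
qed

lemma cosalg_mult:
  assumes "f \<in> cosalg L" "g \<in> cosalg L"
  shows "(\<lambda>z. f z * g z) \<in> cosalg L"
  using assms(1)
proof (induction rule: cosalg.induct)
  case (base l a b)
  then show ?case using cosalg_mult_base[OF base assms(2)] by simp
next
  case (add f1 f2)
  have e: "(\<lambda>z. (f1 z + f2 z) * g z) = (\<lambda>z. (\<lambda>z. f1 z * g z) z + (\<lambda>z. f2 z * g z) z)"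
    by (simp add: algebra_simps)
  show ?case unfolding e by (rule cosalg.add[OF add.IH])
qed

lemma cosalg_sep:
  assumes "x \<in> S" "y \<in> S" "x \<noteq> y"
  shows "\<exists>f. f \<in> cosalg L \<and> f x \<noteq> f y"
proof -
  obtain l where l: "l \<in> L" "l x \<noteq> l y" using sep[OF assms] by blast
  define s where "s = (pi/2) / (l x - l y)"
  define b where "b = pi/2 - s * l y"
  have d: "l x - l y \<noteq> 0" using l by simp
  have 1: "s * l y + b = pi/2" by (simp add: b_def)
  have "s * l x + b = s * (l x - l y) + pi/2" by (simp add: b_def algebra_simps)
  also have "\<dots> = pi" using d by (simp add: s_def field_simps)
  finally have 2: "s * l x + b = pi" .
  have "(\<lambda>z. 1 * cos ((\<lambda>z. s * l z) z + b)) \<in> cosalg L"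
    by (intro cosalg.base lscale l)
  moreover have "cos (s * l x + b) \<noteq> cos (s * l y + b)" unfolding 1 2 by simp
  ultimately show ?thesis by (intro exI[of _ "\<lambda>z. 1 * cos (s * l z + b)"]) simp
qed

lemma cosalg_dense:
  assumes "continuous_on S g" "e > 0"
  shows "\<exists>f. f \<in> cosalg L \<and> (\<forall>z\<in>S. \<bar>g z - f z\<bar> < e)"
  by (rule Stone_Weierstrass_HOL[where P = "\<lambda>f. f \<in> cosalg L", OF cpt])
     (use assms cosalg_const cosalg_cont cosalg.add cosalg_mult cosalg_sep in auto)

lemma bounded_on_S:
  assumes "l \<in> L" shows "\<exists>M. \<forall>z\<in>S. \<bar>l z\<bar> \<le> M"
proof -
  have "compact (l ` S)" by (rule compact_continuous_image[OF cont[OF assms] cpt])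
  then have "bounded (l ` S)" by (rule compact_imp_bounded)
  then show ?thesis unfolding bounded_iff by auto
qed

lemma cosalg_net:
  assumes sc: "continuous_on UNIV \<sigma>" and tw: "tauber_wiener \<sigma>"
  assumes "f \<in> cosalg L" "e > 0"
  shows "\<exists>h. isnet L \<sigma> h \<and> (\<forall>z\<in>S. \<bar>f z - h z\<bar> < e)"
  using assms(3,4)
proof (induction arbitrary: e rule: cosalg.induct)
  case (base l a b)
  obtain M where M: "\<forall>z\<in>S. \<bar>l z\<bar> \<le> M" using bounded_on_S[OF base(1)] by blast
  define lo where "lo = - \<bar>M\<bar> - \<bar>b\<bar> - 1"
  define hi where "hi = \<bar>M\<bar> + \<bar>b\<bar> + 1"
  have "lo < hi" by (simp add: lo_def hi_def)
  moreover have "continuous_on {lo..hi} cos" by (intro continuous_intros)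
  moreover have "e / (\<bar>a\<bar> + 1) > 0" using base(2) by simp
  ultimately obtain n c w \<theta> where approx:
    "\<forall>t\<in>{lo..hi}. \<bar>cos t - (\<Sum>i<(n::nat). c i * \<sigma> (w i * t - \<theta> i))\<bar> < e / (\<bar>a\<bar> + 1)"
    using tw unfolding tauber_wiener_def by blast
  define h where "h = (\<lambda>z. \<Sum>i<n. (a * c i) * \<sigma> ((\<lambda>z. w i * l z) z - (\<theta> i - w i * b)))"
  have "isnet L \<sigma> h" unfolding h_def
    by (intro isnet_sum isnet_single lscale base(1))
  moreover have "\<forall>z\<in>S. \<bar>a * cos (l z + b) - h z\<bar> < e"
  proof
    fix z assume z: "z \<in> S"
    have t: "l z + b \<in> {lo..hi}" using M z by (auto simp: lo_def hi_def abs_le_iff)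
    have "h z = a * (\<Sum>i<n. c i * \<sigma> (w i * (l z + b) - \<theta> i))"
      unfolding h_def by (simp add: sum_distrib_left algebra_simps)
    then have "\<bar>a * cos (l z + b) - h z\<bar> = \<bar>a\<bar> * \<bar>cos (l z + b) - (\<Sum>i<n. c i * \<sigma> (w i * (l z + b) - \<theta> i))\<bar>"
      by (simp add: abs_mult[symmetric] algebra_simps)
    also have "\<dots> \<le> \<bar>a\<bar> * (e / (\<bar>a\<bar> + 1))"
      using approx t by (intro mult_left_mono) (auto intro: less_imp_le)
    also have "\<dots> < e" using base(2) by (simp add: field_simps)
    finally show "\<bar>a * cos (l z + b) - h z\<bar> < e" .
  qed
  ultimately show ?case by blast
next
  case (add f g)
  obtain h1 where h1: "isnet L \<sigma> h1" "\<forall>z\<in>S. \<bar>f z - h1 z\<bar> < e/2" using add.IH(1)[of "e/2"] add.prems by auto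
  obtain h2 where h2: "isnet L \<sigma> h2" "\<forall>z\<in>S. \<bar>g z - h2 z\<bar> < e/2" using add.IH(2)[of "e/2"] add.prems by auto
  show ?case
  proof (intro exI conjI)
    show "isnet L \<sigma> (\<lambda>z. h1 z + h2 z)" by (rule isnet_add[OF h1(1) h2(1)])
    show "\<forall>z\<in>S. \<bar>f z + g z - (h1 z + h2 z)\<bar> < e"
    proof
      fix z assume "z \<in> S"
      then have "\<bar>f z - h1 z\<bar> < e/2" "\<bar>g z - h2 z\<bar> < e/2" using h1 h2 by auto
      then show "\<bar>f z + g z - (h1 z + h2 z)\<bar> < e" by linarith
    qed
  qed
qed

theorem UA:
  assumes sc: "continuous_on UNIV \<sigma>" and tw: "tauber_wiener \<sigma>"
  assumes g: "continuous_on S g" and e: "e > 0"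
  shows "\<exists>(n::nat) c l \<theta>. (\<forall>i<n. l i \<in> L) \<and> (\<forall>z\<in>S. \<bar>g z - (\<Sum>i<n. c i * \<sigma> (l i z - \<theta> i))\<bar> < e)"
proof -
  have e2: "e/2 > 0" using e by simp
  obtain f where f: "f \<in> cosalg L" "\<forall>z\<in>S. \<bar>g z - f z\<bar> < e/2" using cosalg_dense[OF g e2] by blast
  obtain h where h: "isnet L \<sigma> h" "\<forall>z\<in>S. \<bar>f z - h z\<bar> < e/2" using cosalg_net[OF sc tw f(1) e2] by blast
  obtain n c l \<theta> where h': "\<forall>i<(n::nat). l i \<in> L" "h = (\<lambda>z. \<Sum>i<n. c i * \<sigma> (l i z - \<theta> i))"
    using h(1) unfolding isnet_def by (elim exE conjE) (rule that; assumption)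
  have "\<forall>z\<in>S. \<bar>g z - h z\<bar> < e"
  proof
    fix z assume "z \<in> S"
    then have "\<bar>g z - f z\<bar> < e/2" "\<bar>f z - h z\<bar> < e/2" using f h by auto
    then show "\<bar>g z - h z\<bar> < e" by linarith
  qed
  then show ?thesis using h' by blast
qed

end

definition goodg :: "('a::real_vector \<Rightarrow> real) \<Rightarrow> 'a \<Rightarrow> ('a \<times> real) set \<Rightarrow> bool" where
  "goodg p z G \<longleftrightarrow> (\<forall>x a b. (x,a)\<in>G \<longrightarrow> (x,b)\<in>G \<longrightarrow> a=b) \<and>
     (\<forall>x a y b. (x,a)\<in>G \<longrightarrow> (y,b)\<in>G \<longrightarrow> (x+y, a+b)\<in>G) \<and>
     (\<forall>x a c. (x,a)\<in>G \<longrightarrow> (c *\<^sub>R x, c*a)\<in>G) \<and>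
     (\<forall>x a. (x,a)\<in>G \<longrightarrow> a \<le> p x) \<and> (z, p z) \<in> G"

lemma goodg_fun: "goodg p z G \<Longrightarrow> (x,a)\<in>G \<Longrightarrow> (x,b)\<in>G \<Longrightarrow> a=b"
  unfolding goodg_def by blast
lemma goodg_add: "goodg p z G \<Longrightarrow> (x,a)\<in>G \<Longrightarrow> (y,b)\<in>G \<Longrightarrow> (x+y, a+b)\<in>G"
  unfolding goodg_def by blast
lemma goodg_sc: "goodg p z G \<Longrightarrow> (x,a)\<in>G \<Longrightarrow> (c *\<^sub>R x, c*a)\<in>G"
  unfolding goodg_def by blast
lemma goodg_bd: "goodg p z G \<Longrightarrow> (x,a)\<in>G \<Longrightarrow> a \<le> p x"
  unfolding goodg_def by blast
lemma goodg_z: "goodg p z G \<Longrightarrow> (z, p z)\<in>G"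
  unfolding goodg_def by blast

lemma HB:
  fixes p :: "'a::real_vector \<Rightarrow> real"
  assumes sub: "\<And>x y. p (x+y) \<le> p x + p y"
    and hom: "\<And>c x. c > 0 \<Longrightarrow> p (c *\<^sub>R x) = c * p x"
    and z: "z \<noteq> 0"
  shows "\<exists>f. linear f \<and> f z = p z \<and> (\<forall>x. f x \<le> p x)"
proof -
  have p0: "p 0 = 0"
  proof -
    have "p ((2::real) *\<^sub>R 0) = 2 * p 0" by (rule hom) simp
    then show ?thesis by simp
  qed
  have pneg: "0 \<le> p x + p (-x)" for x
    using sub[of x "-x"] p0 by simp
  define B where "B = {(c *\<^sub>R z, c * p z) | c. True}"
  have goodB: "goodg p z B"
    unfolding goodg_def
  proof (intro conjI allI impI)
    fix x a b assume "(x,a)\<in>B" "(x,b)\<in>B"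
    then obtain c d where "x = c *\<^sub>R z" "a = c * p z" "x = d *\<^sub>R z" "b = d * p z"
      unfolding B_def by blast
    then have "c = d" using z by (metis scaleR_cancel_right)
    then show "a = b" using \<open>a = c * p z\<close> \<open>b = d * p z\<close> by simp
  next
    fix x a y b assume "(x,a)\<in>B" "(y,b)\<in>B"
    then obtain c d where "x = c *\<^sub>R z" "a = c * p z" "y = d *\<^sub>R z" "b = d * p z"
      unfolding B_def by blast
    then show "(x+y, a+b) \<in> B" unfolding B_def
      by (auto intro!: exI[of _ "c+d"] simp: scaleR_add_left distrib_right)
  next
    fix x a c assume "(x,a)\<in>B"
    then obtain d where "x = d *\<^sub>R z" "a = d * p z"
      unfolding B_def by blast
    then show "(c *\<^sub>R x, c*a) \<in> B" unfolding B_def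
      by (auto intro!: exI[of _ "c*d"])
  next
    fix x a assume "(x,a)\<in>B"
    then obtain c where xa: "x = c *\<^sub>R z" "a = c * p z"
      unfolding B_def by blast
    show "a \<le> p x"
    proof (cases "c > 0")
      case True then show ?thesis using hom[OF True, of z] xa by simp
    next
      case False
      show ?thesis
      proof (cases "c = 0")
        case True then show ?thesis using xa p0 by simp
      next
        case False
        then have d: "-c > 0" using \<open>\<not> c > 0\<close> by simp
        have "p x = p ((-c) *\<^sub>R (-z))" using xa by simp
        also have "\<dots> = (-c) * p (-z)" by (rule hom[OF d])
        finally have "p x = (-c) * p (-z)" .
        moreover have "(-c) * (p z + p (-z)) \<ge> 0" using pneg[of z] d by (intro mult_nonneg_nonneg) auto
        ultimately show ?thesis using xa by (simp add: algebra_simps)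
      qed
    qed
  next
    show "(z, p z) \<in> B" unfolding B_def by (auto intro!: exI[of _ 1])
  qed
  define A where "A = {G. goodg p z G}"
  have "\<forall>C\<in>chains A. \<exists>U\<in>A. \<forall>X\<in>C. X \<subseteq> U"
  proof
    fix C assume C: "C \<in> chains A"
    show "\<exists>U\<in>A. \<forall>X\<in>C. X \<subseteq> U"
    proof (cases "C = {}")
      case True then show ?thesis using goodB A_def by auto
    next
      case False
      have CA: "\<And>G. G \<in> C \<Longrightarrow> goodg p z G" using C unfolding chains_def A_def by auto
      have ch: "\<And>G H. G \<in> C \<Longrightarrow> H \<in> C \<Longrightarrow> G \<subseteq> H \<or> H \<subseteq> G"
        using C unfolding chains_def chain_subset_def by auto
      have "goodg p z (\<Union>C)"
        unfolding goodg_def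
      proof (intro conjI allI impI)
        fix x a b assume "(x,a)\<in>\<Union>C" "(x,b)\<in>\<Union>C"
        then obtain G H where "G\<in>C" "H\<in>C" "(x,a)\<in>G" "(x,b)\<in>H" by auto
        then show "a = b" using ch[of G H] goodg_fun[OF CA[of G]] goodg_fun[OF CA[of H]] by blast
      next
        fix x a y b assume "(x,a)\<in>\<Union>C" "(y,b)\<in>\<Union>C"
        then obtain G H where GH: "G\<in>C" "H\<in>C" "(x,a)\<in>G" "(y,b)\<in>H" by auto
        show "(x+y, a+b) \<in> \<Union>C"
        proof (cases "G \<subseteq> H")
          case True then show ?thesis using GH goodg_add[OF CA[of H]] by blast
        next
          case False then have "H \<subseteq> G" using ch GH by blast
          then show ?thesis using GH goodg_add[OF CA[of G]] by blast
        qed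
      next
        fix x a c assume "(x,a)\<in>\<Union>C"
        then obtain G where "G\<in>C" "(x,a)\<in>G" by auto
        then show "(c *\<^sub>R x, c*a) \<in> \<Union>C" using goodg_sc[OF CA[of G]] by blast
      next
        fix x a assume "(x,a)\<in>\<Union>C"
        then obtain G where "G\<in>C" "(x,a)\<in>G" by auto
        then show "a \<le> p x" using goodg_bd[OF CA[of G]] by blast
      next
        obtain G where "G \<in> C" using False by auto
        then show "(z, p z) \<in> \<Union>C" using goodg_z[OF CA[of G]] by blast
      qed
      then show ?thesis unfolding A_def by auto
    qed
  qed
  from Zorn_Lemma2[OF this] obtain M where M: "M \<in> A" "\<forall>X\<in>A. M \<subseteq> X \<longrightarrow> X = M" by blast
  have gM: "goodg p z M" using M A_def by auto
  have funM: "\<And>x a b. (x,a)\<in>M \<Longrightarrow> (x,b)\<in>M \<Longrightarrow> a = b"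
    and addM: "\<And>x a y b. (x,a)\<in>M \<Longrightarrow> (y,b)\<in>M \<Longrightarrow> (x+y, a+b)\<in>M"
    and scM: "\<And>x a c. (x,a)\<in>M \<Longrightarrow> (c *\<^sub>R x, c*a)\<in>M"
    and bdM: "\<And>x a. (x,a)\<in>M \<Longrightarrow> a \<le> p x"
    and zM: "(z, p z) \<in> M"
    using goodg_fun[OF gM] goodg_add[OF gM] goodg_sc[OF gM] goodg_bd[OF gM] goodg_z[OF gM] by blast+
  have zeroM: "(0, 0) \<in> M" using scM[OF zM, of 0] by simp
  have total: "\<exists>a. (x,a) \<in> M" for x
  proof (rule ccontr)
    assume nw: "\<not> (\<exists>a. (x,a) \<in> M)"
    define w where "w = x"
    have nw: "\<And>a. (w,a) \<notin> M" using nw w_def by auto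
    define Sset where "Sset = {b - p (y - w) | y b. (y,b) \<in> M}"
    define s where "s = Sup Sset"
    have key: "b - p (y - w) \<le> p (x' + w) - a" if "(y,b)\<in>M" "(x',a)\<in>M" for y b x' a
    proof -
      have "a + b \<le> p (x' + y)" using bdM[OF addM[OF that(2) that(1)]] .
      also have "\<dots> = p ((x' + w) + (y - w))" by (simp add: algebra_simps)
      also have "\<dots> \<le> p (x' + w) + p (y - w)" by (rule sub)
      finally show ?thesis by simp
    qed
    have Sne: "Sset \<noteq> {}" using zM unfolding Sset_def by auto
    have Sbdd: "bdd_above Sset"
      unfolding bdd_above_def Sset_def using key[OF _ zM] by blast
    have s_lo: "b - p (y - w) \<le> s" if "(y,b)\<in>M" for y b
      unfolding s_def by (rule cSup_upper[OF _ Sbdd]) (use that Sset_def in auto)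
    have s_hi: "s \<le> p (x' + w) - a" if "(x',a)\<in>M" for x' a
      unfolding s_def by (rule cSup_least[OF Sne]) (use key[OF _ that] Sset_def in auto)
    define M' where "M' = {(x' + t *\<^sub>R w, a + t * s) | x' a t. (x',a) \<in> M}"
    have "goodg p z M'"
      unfolding goodg_def
    proof (intro conjI allI impI)
      fix v a b assume "(v,a)\<in>M'" "(v,b)\<in>M'"
      then obtain x1 a1 t1 x2 a2 t2 where e: "v = x1 + t1 *\<^sub>R w" "a = a1 + t1 * s" "(x1,a1)\<in>M"
        "v = x2 + t2 *\<^sub>R w" "b = a2 + t2 * s" "(x2,a2)\<in>M"
        unfolding M'_def by blast
      have "t1 = t2"
      proof (rule ccontr)
        assume ne: "t1 \<noteq> t2"
        have "(x2 + (-1) *\<^sub>R x1, a2 + (-1) * a1) \<in> M" by (intro addM scM e)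
        then have "((1/(t1 - t2)) *\<^sub>R (x2 + (-1) *\<^sub>R x1), (1/(t1-t2)) * (a2 + (-1) * a1)) \<in> M"
          by (rule scM)
        moreover have "(1/(t1 - t2)) *\<^sub>R (x2 + (-1) *\<^sub>R x1) = w"
        proof -
          have "x2 - x1 = (t1 - t2) *\<^sub>R w" using e by (simp add: algebra_simps)
          then show ?thesis using ne by simp
        qed
        ultimately show False using nw by metis
      qed
      then have "x1 = x2" using e by simp
      then have "a1 = a2" using funM e by blast
      then show "a = b" using e \<open>t1 = t2\<close> by simp
    next
      fix v a v' b assume "(v,a)\<in>M'" "(v',b)\<in>M'"
      then obtain x1 a1 t1 x2 a2 t2 where e: "v = x1 + t1 *\<^sub>R w" "a = a1 + t1 * s" "(x1,a1)\<in>M"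
        "v' = x2 + t2 *\<^sub>R w" "b = a2 + t2 * s" "(x2,a2)\<in>M"
        unfolding M'_def by blast
      have "(x1 + x2, a1 + a2) \<in> M" by (rule addM[OF e(3) e(6)])
      moreover have "v + v' = (x1 + x2) + (t1 + t2) *\<^sub>R w" "a + b = (a1 + a2) + (t1 + t2) * s"
        using e by (simp_all add: algebra_simps)
      ultimately show "(v + v', a + b) \<in> M'" unfolding M'_def by blast
    next
      fix v a c assume "(v,a)\<in>M'"
      then obtain x1 a1 t1 where e: "v = x1 + t1 *\<^sub>R w" "a = a1 + t1 * s" "(x1,a1)\<in>M"
        unfolding M'_def by blast
      have "(c *\<^sub>R x1, c * a1) \<in> M" by (rule scM[OF e(3)])
      moreover have "c *\<^sub>R v = c *\<^sub>R x1 + (c * t1) *\<^sub>R w" "c * a = c * a1 + (c * t1) * s"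
        using e by (simp_all add: algebra_simps)
      ultimately show "(c *\<^sub>R v, c * a) \<in> M'" unfolding M'_def by blast
    next
      fix v a assume "(v,a)\<in>M'"
      then obtain x1 a1 t where e: "v = x1 + t *\<^sub>R w" "a = a1 + t * s" "(x1,a1)\<in>M"
        unfolding M'_def by blast
      show "a \<le> p v"
      proof (cases "t > 0")
        case True
        have "((1/t) *\<^sub>R x1, (1/t) * a1) \<in> M" by (rule scM[OF e(3)])
        from s_hi[OF this] have "s \<le> p ((1/t) *\<^sub>R x1 + w) - (1/t) * a1" .
        then have "t * s \<le> t * p ((1/t) *\<^sub>R x1 + w) - a1"
          using True by (simp add: field_simps)
        also have "t * p ((1/t) *\<^sub>R x1 + w) = p (t *\<^sub>R ((1/t) *\<^sub>R x1 + w))"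
          by (rule hom[OF True, symmetric])
        also have "t *\<^sub>R ((1/t) *\<^sub>R x1 + w) = v" using True e by (simp add: scaleR_add_right)
        finally show ?thesis using e by simp
      next
        case False
        show ?thesis
        proof (cases "t = 0")
          case True then show ?thesis using e bdM by simp
        next
          case False
          then have tp: "-t > 0" using \<open>\<not> t > 0\<close> by simp
          have "((1/(-t)) *\<^sub>R x1, (1/(-t)) * a1) \<in> M" by (rule scM[OF e(3)])
          from s_lo[OF this] have "(1/(-t)) * a1 - p ((1/(-t)) *\<^sub>R x1 - w) \<le> s" .
          then have "a1 - (-t) * p ((1/(-t)) *\<^sub>R x1 - w) \<le> (-t) * s"
            using tp by (simp add: field_simps)
          also have "(-t) * p ((1/(-t)) *\<^sub>R x1 - w) = p ((-t) *\<^sub>R ((1/(-t)) *\<^sub>R x1 - w))"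
            by (rule hom[OF tp, symmetric])
          also have "(-t) *\<^sub>R ((1/(-t)) *\<^sub>R x1 - w) = v" using tp e by (simp add: scaleR_diff_right)
          finally show ?thesis using e by (simp add: algebra_simps)
        qed
      qed
    next
      have "(z, p z) = (z + 0 *\<^sub>R w, p z + 0 * s)" by simp
      then show "(z, p z) \<in> M'" unfolding M'_def using zM by blast
    qed
    moreover have "M \<subseteq> M'"
    proof
      fix q assume "q \<in> M"
      moreover obtain x' a where "q = (x', a)" by (cases q)
      moreover have "(x', a) = (x' + 0 *\<^sub>R w, a + 0 * s)" by simp
      ultimately show "q \<in> M'" unfolding M'_def by blast
    qed
    ultimately have "M' = M" using M A_def by auto
    moreover have "(w, 0 + 1 * s) \<in> M'"
    proof -
      have "(w, 0 + 1 * s) = (0 + 1 *\<^sub>R w, 0 + 1 * s)" by simp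
      then show ?thesis unfolding M'_def using zeroM by blast
    qed
    ultimately show False using nw by auto
  qed
  define f where "f x = (THE a. (x,a) \<in> M)" for x
  have fM: "(x, f x) \<in> M" for x
    unfolding f_def using total[of x] funM by (metis theI)
  have fval: "(x,a) \<in> M \<Longrightarrow> f x = a" for x a using fM funM by blast
  have "linear f"
  proof (rule linearI)
    fix x y show "f (x + y) = f x + f y" by (rule fval[OF addM[OF fM fM]])
  next
    fix c x show "f (c *\<^sub>R x) = c *\<^sub>R f x" using fval[OF scM[OF fM]] by simp
  qed
  moreover have "f z = p z" by (rule fval[OF zM])
  moreover have "\<forall>x. f x \<le> p x" using bdM[OF fM] by blast
  ultimately show ?thesis by blast
qed

locale hlc =
  fixes T :: "'a::real_vector topology"
  assumes hlc: "hlc_tvs T"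
begin

lemma top: "topspace T = UNIV" using hlc unfolding hlc_tvs_def by blast

lemma cont_add_const: "continuous_map T T (\<lambda>x. x + c)"
proof -
  have a: "continuous_map (prod_topology T T) T (\<lambda>(x, y). x + y)" using hlc unfolding hlc_tvs_def by blast
  have b: "continuous_map T (prod_topology T T) (\<lambda>x. (x, c))"
    by (intro continuous_map_pairedI) (simp_all add: top continuous_map_id[unfolded id_def])
  have "continuous_map T T ((\<lambda>(x, y). x + y) \<circ> (\<lambda>x. (x, c)))" by (rule continuous_map_compose[OF b a])
  then show ?thesis by (simp add: o_def)
qed

lemma cont_scale_const: "continuous_map T T (\<lambda>x. c *\<^sub>R x)"
proof -
  have a: "continuous_map (prod_topology euclideanreal T) T (\<lambda>(c, x). c *\<^sub>R x)" using hlc unfolding hlc_tvs_def by blast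
  have b: "continuous_map T (prod_topology euclideanreal T) (\<lambda>x. (c, x))"
    by (intro continuous_map_pairedI) (simp_all add: top continuous_map_id[unfolded id_def])
  have "continuous_map T T ((\<lambda>(c, x). c *\<^sub>R x) \<circ> (\<lambda>x. (c, x)))" by (rule continuous_map_compose[OF b a])
  then show ?thesis by (simp add: o_def)
qed

lemma cont_scale_vec: "continuous_map euclideanreal T (\<lambda>t. t *\<^sub>R v)"
proof -
  have a: "continuous_map (prod_topology euclideanreal T) T (\<lambda>(c, x). c *\<^sub>R x)" using hlc unfolding hlc_tvs_def by blast
  have b: "continuous_map euclideanreal (prod_topology euclideanreal T) (\<lambda>t. (t, v))"
    by (intro continuous_map_pairedI) (simp_all add: top continuous_map_id[unfolded id_def])
  have "continuous_map euclideanreal T ((\<lambda>(c, x). c *\<^sub>R x) \<circ> (\<lambda>t. (t, v)))" by (rule continuous_map_compose[OF b a])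
  then show ?thesis by (simp add: o_def)
qed

lemma open_preimage:
  assumes "continuous_map T T g" "openin T U"
  shows "openin T {x. g x \<in> U}"
  using openin_continuous_map_preimage[OF assms] by (simp add: top)

lemma sep:
  assumes xy: "x \<noteq> y"
  shows "\<exists>f\<in>tvs_dual T. f x \<noteq> f y"
proof -
  define z where "z = x - y"
  have z: "z \<noteq> 0" using xy z_def by simp
  obtain U0 V0 where UV: "openin T U0" "openin T V0" "0 \<in> U0" "z \<in> V0" "disjnt U0 V0"
    using hlc z unfolding hlc_tvs_def Hausdorff_space_def by (metis UNIV_I)
  have zU0: "z \<notin> U0" using UV unfolding disjnt_def by blast
  obtain U1 where U1: "openin T U1" "convex U1" "0 \<in> U1" "U1 \<subseteq> U0"
    using hlc UV unfolding hlc_tvs_def by blast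
  define U where "U = U1 \<inter> {v. (-1) *\<^sub>R v \<in> U1}"
  have Uopen: "openin T U" unfolding U_def
    by (intro openin_Int U1 open_preimage[OF cont_scale_const]) 
  have Uconv: "convex U" unfolding U_def
  proof (intro convex_Int U1)
    have "{v. (-1) *\<^sub>R v \<in> U1} = (\<lambda>x. - x) ` U1" by force
    then show "convex {v. (-1) *\<^sub>R v \<in> U1}" using convex_negations[OF U1(2)] by simp
  qed
  have U0in: "0 \<in> U" using U1 U_def by simp
  have zU: "z \<notin> U" using zU0 U1 U_def by auto
  have Usym: "-v \<in> U \<longleftrightarrow> v \<in> U" for v unfolding U_def by auto
  have absorb: "\<exists>t>0. (1/t) *\<^sub>R v \<in> U" for v
  proof -
    have "openin euclideanreal {s \<in> topspace euclideanreal. s *\<^sub>R v \<in> U}"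
      by (rule openin_continuous_map_preimage[OF cont_scale_vec Uopen])
    then have "open {s. s *\<^sub>R v \<in> U}" by simp
    moreover have "0 \<in> {s. s *\<^sub>R v \<in> U}" using U0in by simp
    ultimately obtain d where d: "d > 0" "ball 0 d \<subseteq> {s. s *\<^sub>R v \<in> U}"
      using open_contains_ball by blast
    have "d/2 \<in> ball 0 d" using d by simp
    then have "(d/2) *\<^sub>R v \<in> U" using d by blast
    then show ?thesis using d by (intro exI[of _ "2/d"]) auto
  qed
  define Sv where "Sv v = {t. 0 < t \<and> (1/t) *\<^sub>R v \<in> U}" for v
  define p where "p v = Inf (Sv v)" for v
  have Sne: "Sv v \<noteq> {}" for v using absorb[of v] Sv_def by auto
  have Sbdd: "bdd_below (Sv v)" for v unfolding bdd_below_def Sv_def by (auto intro!: exI[of _ 0])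
  have p_nonneg: "0 \<le> p v" for v unfolding p_def by (rule cInf_greatest[OF Sne]) (auto simp: Sv_def)
  have star: "(1/t') *\<^sub>R v \<in> U" if "(1/t) *\<^sub>R v \<in> U" "0 < t" "t \<le> t'" for v t t'
  proof -
    have "(t/t') *\<^sub>R ((1/t) *\<^sub>R v) + (1 - t/t') *\<^sub>R 0 \<in> U"
    proof (rule convexD[OF Uconv that(1) U0in])
      show "0 \<le> t/t'" using that by simp
      show "0 \<le> 1 - t/t'" using that by simp
    qed simp
    moreover have "(t/t') *\<^sub>R ((1/t) *\<^sub>R v) + (1 - t/t') *\<^sub>R 0 = (1/t') *\<^sub>R v" using that by simp
    ultimately show ?thesis by metis
  qed
  have below: "(1/t) *\<^sub>R v \<in> U" if lt: "p v < t" for v t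
  proof -
    have "Inf (Sv v) < t" using lt p_def by simp
    then obtain t0 where "t0 \<in> Sv v" "t0 < t" using cInf_lessD[OF Sne] by blast
    then show ?thesis using star[of t0 v t] Sv_def by auto
  qed
  have inU: "p v \<le> 1" if "v \<in> U" for v
    unfolding p_def by (rule cInf_lower[OF _ Sbdd]) (use that Sv_def in auto)
  have pz: "1 \<le> p z" using below[of z 1] zU by force
  have psym: "p (-v) = p v" for v
  proof -
    have e: "(1/t) *\<^sub>R (-v) \<in> U \<longleftrightarrow> (1/t) *\<^sub>R v \<in> U" for t
      using Usym[of "(1/t) *\<^sub>R v"] by simp
    have "Sv (-v) = Sv v" unfolding Sv_def using e by blast
    then show ?thesis by (simp add: p_def)
  qed
  have psub: "p (u + v) \<le> p u + p v" for u v
  proof (rule field_le_epsilon)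
    fix e :: real assume e: "0 < e"
    define s where "s = p u + e/2"
    define t where "t = p v + e/2"
    have s: "s > 0" "(1/s) *\<^sub>R u \<in> U" using below[of u s] p_nonneg[of u] e s_def by auto
    have t: "t > 0" "(1/t) *\<^sub>R v \<in> U" using below[of v t] p_nonneg[of v] e t_def by auto
    have "(s/(s+t)) *\<^sub>R ((1/s) *\<^sub>R u) + (t/(s+t)) *\<^sub>R ((1/t) *\<^sub>R v) \<in> U"
    proof (rule convexD[OF Uconv s(2) t(2)])
      show "0 \<le> s/(s+t)" "0 \<le> t/(s+t)" using s t by simp_all
      show "s/(s+t) + t/(s+t) = 1" using s t by (simp add: add_divide_distrib[symmetric])
    qed
    moreover have "(s/(s+t)) *\<^sub>R ((1/s) *\<^sub>R u) + (t/(s+t)) *\<^sub>R ((1/t) *\<^sub>R v) = (1/(s+t)) *\<^sub>R (u + v)"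
      using s t by (simp add: scaleR_add_right)
    ultimately have "s + t \<in> Sv (u+v)" using s t Sv_def by auto
    then have "p (u+v) \<le> s + t" unfolding p_def by (rule cInf_lower[OF _ Sbdd])
    then show "p (u + v) \<le> p u + p v + e" using s_def t_def by simp
  qed
  have phom_le: "p (c *\<^sub>R v) \<le> c * p v" if c: "c > 0" for c v
  proof (rule field_le_epsilon)
    fix e :: real assume e: "0 < e"
    define t where "t = p v + e/c"
    have "e/c > 0" using e c by simp
    then have t: "t > 0" "(1/t) *\<^sub>R v \<in> U" using below[of v t] p_nonneg[of v] t_def by auto
    have "(1/(c*t)) *\<^sub>R (c *\<^sub>R v) = (1/t) *\<^sub>R v" using c by simp
    then have "c * t \<in> Sv (c *\<^sub>R v)" using t c Sv_def by auto
    then have "p (c *\<^sub>R v) \<le> c * t" unfolding p_def by (rule cInf_lower[OF _ Sbdd])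
    then show "p (c *\<^sub>R v) \<le> c * p v + e" using c by (simp add: t_def algebra_simps)
  qed
  have phom: "p (c *\<^sub>R v) = c * p v" if c: "c > 0" for c v
  proof -
    have "p v = p ((1/c) *\<^sub>R (c *\<^sub>R v))" using c by simp
    also have "\<dots> \<le> (1/c) * p (c *\<^sub>R v)" using c by (intro phom_le) simp
    finally have "c * p v \<le> p (c *\<^sub>R v)" using c by (simp add: field_simps)
    then show ?thesis using phom_le[OF c, of v] by linarith
  qed
  obtain f where f: "linear f" "f z = p z" "\<forall>v. f v \<le> p v"
    using HB[of p z] psub phom z by blast
  have fabs: "\<bar>f v\<bar> \<le> p v" for v
  proof -
    have "f (-v) = - f v" using f(1) by (simp add: linear_neg)
    then have "- f v \<le> p v" using f(3) psym[of v] by metis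
    then show ?thesis using f(3) by (simp add: abs_le_iff)
  qed
  have fcont: "continuous_map T euclideanreal f"
    unfolding continuous_map_def
  proof (intro conjI allI impI)
    show "f \<in> topspace T \<rightarrow> topspace euclideanreal" by simp
    fix Ob :: "real set" assume "openin euclideanreal Ob"
    then have Ob: "open Ob" by simp
    show "openin T {x \<in> topspace T. f x \<in> Ob}"
    proof (subst openin_subopen, intro ballI)
      fix x0 assume "x0 \<in> {x \<in> topspace T. f x \<in> Ob}"
      then have "f x0 \<in> Ob" by simp
      then obtain r where r: "r > 0" "ball (f x0) r \<subseteq> Ob" using Ob open_contains_ball by blast
      define N where "N = {v. (2/r) *\<^sub>R (v + (-x0)) \<in> U}"
      have "continuous_map T T ((\<lambda>v. (2/r) *\<^sub>R v) \<circ> (\<lambda>v. v + (-x0)))"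
        by (rule continuous_map_compose[OF cont_add_const cont_scale_const])
      then have "openin T N" unfolding N_def using open_preimage[OF _ Uopen] by (simp add: o_def)
      moreover have "x0 \<in> N" using U0in N_def by simp
      moreover have "N \<subseteq> {x \<in> topspace T. f x \<in> Ob}"
      proof
        fix v assume "v \<in> N"
        then have "p ((2/r) *\<^sub>R (v - x0)) \<le> 1" using inU N_def by simp
        then have "(2/r) * p (v - x0) \<le> 1" using phom[of "2/r" "v - x0"] r by simp
        then have "p (v - x0) \<le> r/2" using r by (simp add: field_simps)
        moreover have "f v - f x0 = f (v - x0)" using f(1) by (simp add: linear_diff)
        ultimately have "\<bar>f v - f x0\<bar> < r" using fabs[of "v - x0"] r by simp
        then have "f v \<in> ball (f x0) r" by (simp add: dist_real_def abs_minus_commute)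
        then show "v \<in> {x \<in> topspace T. f x \<in> Ob}" using r top by auto
      qed
      ultimately show "\<exists>N. openin T N \<and> x0 \<in> N \<and> N \<subseteq> {x \<in> topspace T. f x \<in> Ob}" by blast
    qed
  qed
  have "f x - f y = f z" using f(1) z_def by (simp add: linear_diff)
  then have "f x \<noteq> f y" using f(2) pz by simp
  moreover have "f \<in> tvs_dual T" unfolding tvs_dual_def using f(1) fcont by simp
  ultimately show ?thesis by blast
qed

end

lemma dual_zero: "(\<lambda>x. 0) \<in> tvs_dual T"
  unfolding tvs_dual_def by (simp add: linear_zero)

lemma dual_add: "f \<in> tvs_dual T \<Longrightarrow> g \<in> tvs_dual T \<Longrightarrow> (\<lambda>x. f x + g x) \<in> tvs_dual T"
  unfolding tvs_dual_def by (auto intro: linear_compose_add continuous_map_add)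

lemma dual_scale: "f \<in> tvs_dual T \<Longrightarrow> (\<lambda>x. c * f x) \<in> tvs_dual T"
  unfolding tvs_dual_def by (auto intro!: linearI continuous_map_real_mult simp: linear_add linear_scale algebra_simps)

lemma dual_sum: "(\<And>i. i \<in> I \<Longrightarrow> f i \<in> tvs_dual T) \<Longrightarrow> (\<lambda>x. \<Sum>i\<in>I. c i * f i x) \<in> tvs_dual T"
proof (induction I rule: infinite_finite_induct)
  case (infinite A) then show ?case by (simp add: dual_zero)
next
  case empty then show ?case by (simp add: dual_zero)
next
  case (insert i F)
  then show ?case by (simp add: dual_add dual_scale)
qed

definition OKf :: "'a::real_vector topology \<Rightarrow> (real \<Rightarrow> real) \<Rightarrow> ('a \<Rightarrow> real^'d \<Rightarrow> real^'m) \<Rightarrow> bool" where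
  "OKf T \<sigma> H \<longleftrightarrow> (\<exists>p::nat. p \<ge> 1 \<and>
           (\<exists>(\<omega> :: nat \<Rightarrow> real^'d) (\<zeta> :: nat \<Rightarrow> real) (b :: nat \<Rightarrow> 'a \<Rightarrow> real^'m).
              (\<forall>k<p. topo_nn T \<sigma> (b k)) \<and>
              (\<forall>u y. H u y = (\<Sum>k<p. \<sigma> (\<omega> k \<bullet> y + \<zeta> k) *\<^sub>R b k u))))"

lemma TN:
  assumes "\<And>i. i < (N::nat) \<Longrightarrow> F i \<in> tvs_dual T"
  shows "topo_nn T \<sigma> (\<lambda>x. (\<Sum>i<N. c i * \<sigma> (F i x - \<theta> i)) *\<^sub>R (v::real^'m))"
proof -
  define f where "f i = (if i < N then F i else (\<lambda>x. 0))" for i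
  define A where "A j i = (if i < N then v$j * c i else 0)" for j i
  have 1: "\<forall>i<Suc N. f i \<in> tvs_dual T" using assms by (auto simp: f_def dual_zero)
  have 2: "\<forall>x. (\<Sum>i<N. c i * \<sigma> (F i x - \<theta> i)) *\<^sub>R v = (\<chi> j. \<Sum>i<Suc N. A j i * \<sigma> (f i x - \<theta> i))"
  proof (intro allI, subst vec_eq_iff, intro allI)
    fix x j
    have "(\<Sum>i<Suc N. A j i * \<sigma> (f i x - \<theta> i)) = (\<Sum>i<N. A j i * \<sigma> (f i x - \<theta> i))"
      by (simp add: A_def)
    also have "\<dots> = (\<Sum>i<N. v$j * (c i * \<sigma> (F i x - \<theta> i)))"
      by (rule sum.cong) (auto simp: A_def f_def)
    finally show "((\<Sum>i<N. c i * \<sigma> (F i x - \<theta> i)) *\<^sub>R v) $ j = (\<chi> j. \<Sum>i<Suc N. A j i * \<sigma> (f i x - \<theta> i)) $ j"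
      by (simp add: sum_distrib_left mult.commute)
  qed
  show ?thesis unfolding topo_nn_def
    by (rule exI[of _ "Suc N"], rule exI[of _ f], rule exI[of _ \<theta>], rule exI[of _ A]) (use 1 2 in simp)
qed

lemma OK_term:
  assumes "topo_nn T \<sigma> b"
  shows "OKf T \<sigma> (\<lambda>u y. \<sigma> (\<omega> \<bullet> y + \<zeta>) *\<^sub>R b u)"
  unfolding OKf_def
  by (rule exI[of _ 1], rule conjI, simp, rule exI[of _ "\<lambda>_. \<omega>"], rule exI[of _ "\<lambda>_. \<zeta>"],
      rule exI[of _ "\<lambda>_. b"]) (use assms in simp)

lemma OK_add:
  assumes "OKf T \<sigma> H1" "OKf T \<sigma> H2"
  shows "OKf T \<sigma> (\<lambda>u y. H1 u y + H2 u y)"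
proof -
  obtain p1 w1 z1 b1 where 1: "(p1::nat) \<ge> 1" "\<forall>k<p1. topo_nn T \<sigma> (b1 k)" "\<forall>u y. H1 u y = (\<Sum>k<p1. \<sigma> (w1 k \<bullet> y + z1 k) *\<^sub>R b1 k u)"
    using assms(1) unfolding OKf_def by blast
  obtain p2 w2 z2 b2 where 2: "(p2::nat) \<ge> 1" "\<forall>k<p2. topo_nn T \<sigma> (b2 k)" "\<forall>u y. H2 u y = (\<Sum>k<p2. \<sigma> (w2 k \<bullet> y + z2 k) *\<^sub>R b2 k u)"
    using assms(2) unfolding OKf_def by blast
  define w where "w i = (if i<p1 then w1 i else w2 (i-p1))" for i
  define z where "z i = (if i<p1 then z1 i else z2 (i-p1))" for i
  define b where "b i = (if i<p1 then b1 i else b2 (i-p1))" for i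
  have "\<forall>k<p1+p2. topo_nn T \<sigma> (b k)" using 1 2 by (auto simp: b_def)
  moreover have "\<forall>u y. H1 u y + H2 u y = (\<Sum>k<p1+p2. \<sigma> (w k \<bullet> y + z k) *\<^sub>R b k u)"
  proof (intro allI)
    fix u y
    have "(\<Sum>k<p1+p2. \<sigma> (w k \<bullet> y + z k) *\<^sub>R b k u) =
      (\<Sum>k<p1+p2. (if k<p1 then \<sigma> (w1 k \<bullet> y + z1 k) *\<^sub>R b1 k u else \<sigma> (w2 (k-p1) \<bullet> y + z2 (k-p1)) *\<^sub>R b2 (k-p1) u))"
      by (rule sum.cong) (auto simp: w_def z_def b_def)
    also have "\<dots> = H1 u y + H2 u y" by (subst sum_concat) (simp add: 1 2)
    finally show "H1 u y + H2 u y = (\<Sum>k<p1+p2. \<sigma> (w k \<bullet> y + z k) *\<^sub>R b k u)" by simp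
  qed
  moreover have "p1 + p2 \<ge> 1" using 1 by simp
  ultimately show ?thesis unfolding OKf_def by blast
qed

lemma OK_zero:
  "OKf T \<sigma> (\<lambda>u y. 0)"
proof -
  have "topo_nn T \<sigma> (\<lambda>x. (\<Sum>i<0. 0 * \<sigma> ((\<lambda>x. 0) x - 0)) *\<^sub>R (0::real^'m))"
    using TN[where N=0 and F="\<lambda>i x. 0" and T=T and \<sigma>=\<sigma> and c="\<lambda>i. 0" and \<theta>="\<lambda>i. 0" and v="0::real^'m"] by simp
  then have "topo_nn T \<sigma> (\<lambda>x. (0::real^'m))" by simp
  from OK_term[OF this, of 0 0] show ?thesis by simp
qed

lemma OK_sum:
  assumes "\<And>i. i \<in> I \<Longrightarrow> OKf T \<sigma> (H i)"
  shows "OKf T \<sigma> (\<lambda>u y. \<Sum>i\<in>I. H i u y)"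
  using assms
proof (induction I rule: infinite_finite_induct)
  case (infinite A) then show ?case by (simp add: OK_zero)
next
  case empty then show ?case by (simp add: OK_zero)
next
  case (insert i F)
  then show ?case by (simp add: OK_add)
qed

definition isnetD :: "'a::real_vector topology \<Rightarrow> (real \<Rightarrow> real) \<Rightarrow> ('a \<Rightarrow> real) \<Rightarrow> bool" where
  "isnetD T \<sigma> h \<longleftrightarrow> (\<exists>(N::nat) c F \<theta>. (\<forall>i<N. F i \<in> tvs_dual T) \<and> h = (\<lambda>x. \<Sum>i<N. c i * \<sigma> (F i x - \<theta> i)))"

definition isnetK :: "(real \<Rightarrow> real) \<Rightarrow> (real^'d \<Rightarrow> real) \<Rightarrow> bool" where
  "isnetK \<sigma> g \<longleftrightarrow> (\<exists>(Q::nat) c \<omega> \<zeta>. g = (\<lambda>y. \<Sum>k<Q. c k * \<sigma> (\<omega> k \<bullet> y + \<zeta> k)))"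

lemma OK_prod:
  assumes h: "isnetD T \<sigma> h" and g: "isnetK \<sigma> g"
  shows "OKf T \<sigma> (\<lambda>x y. (g y * h x) *\<^sub>R (v::real^'m))"
proof -
  obtain N c F \<theta> where hN: "\<forall>i<(N::nat). F i \<in> tvs_dual T" "h = (\<lambda>x. \<Sum>i<N. c i * \<sigma> (F i x - \<theta> i))"
    using h unfolding isnetD_def by (elim exE conjE) (rule that; assumption)
  obtain Q d \<omega> \<zeta> where gQ: "g = (\<lambda>y. \<Sum>k<(Q::nat). d k * \<sigma> (\<omega> k \<bullet> y + \<zeta> k))"
    using g unfolding isnetK_def by (elim exE) (rule that)
  have b: "topo_nn T \<sigma> (\<lambda>x. (\<Sum>i<N. (d k * c i) * \<sigma> (F i x - \<theta> i)) *\<^sub>R v)" for k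
    by (rule TN) (use hN in auto)
  have "OKf T \<sigma> (\<lambda>x y. \<Sum>k\<in>{..<Q}. \<sigma> (\<omega> k \<bullet> y + \<zeta> k) *\<^sub>R ((\<Sum>i<N. (d k * c i) * \<sigma> (F i x - \<theta> i)) *\<^sub>R v))"
    by (intro OK_sum OK_term b)
  moreover have "(\<lambda>x y. \<Sum>k\<in>{..<Q}. \<sigma> (\<omega> k \<bullet> y + \<zeta> k) *\<^sub>R ((\<Sum>i<N. (d k * c i) * \<sigma> (F i x - \<theta> i)) *\<^sub>R v))
     = (\<lambda>x y. (g y * h x) *\<^sub>R v)"
  proof (intro ext)
    fix x y
    have e: "(\<Sum>i<N. (d k * c i) * \<sigma> (F i x - \<theta> i)) = d k * h x" for k
      by (simp add: hN sum_distrib_left mult.assoc)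
    have "(\<Sum>k\<in>{..<Q}. \<sigma> (\<omega> k \<bullet> y + \<zeta> k) *\<^sub>R ((\<Sum>i<N. (d k * c i) * \<sigma> (F i x - \<theta> i)) *\<^sub>R v))
      = (\<Sum>k\<in>{..<Q}. (d k * \<sigma> (\<omega> k \<bullet> y + \<zeta> k) * h x) *\<^sub>R v)"
      unfolding e by (rule sum.cong) (simp_all add: mult_ac)
    also have "\<dots> = (g y * h x) *\<^sub>R v"
      by (simp add: gQ scaleR_sum_left[symmetric] sum_distrib_right)
    finally show "(\<Sum>k\<in>{..<Q}. \<sigma> (\<omega> k \<bullet> y + \<zeta> k) *\<^sub>R ((\<Sum>i<N. (d k * c i) * \<sigma> (F i x - \<theta> i)) *\<^sub>R v))
      = (g y * h x) *\<^sub>R v" .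
  qed
  ultimately show ?thesis by simp
qed

lemma OK_vec:
  assumes h: "isnetD T \<sigma> h" and g: "\<And>j. isnetK \<sigma> (g j)"
  shows "OKf T \<sigma> (\<lambda>x y. h x *\<^sub>R (\<chi> j. g j y) :: real^'m)"
proof -
  have "OKf T \<sigma> (\<lambda>x y. \<Sum>j\<in>(UNIV::'m set). (g j y * h x) *\<^sub>R (\<chi> i. if i = j then 1 else 0))"
    by (intro OK_sum OK_prod h g)
  moreover have "(\<lambda>x y. \<Sum>j\<in>(UNIV::'m set). (g j y * h x) *\<^sub>R ((\<chi> i. if i = j then 1 else 0)::real^'m))
     = (\<lambda>x y. h x *\<^sub>R (\<chi> j. g j y))"
  proof (intro ext)
    fix x y
    show "(\<Sum>j\<in>(UNIV::'m set). (g j y * h x) *\<^sub>R ((\<chi> i. if i = j then 1 else 0)::real^'m)) = h x *\<^sub>R (\<chi> j. g j y)"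
    proof (subst vec_eq_iff, intro allI)
      fix i :: 'm
      have "(\<Sum>j\<in>UNIV. (g j y * h x) *\<^sub>R ((\<chi> i. if i = j then 1 else 0)::real^'m)) $ i
          = (\<Sum>j\<in>UNIV. (if i = j then g j y * h x else 0))"
        by (simp add: sum_component if_distrib cong: if_cong)
      also have "\<dots> = g i y * h x" by simp
      finally show "(\<Sum>j\<in>UNIV. (g j y * h x) *\<^sub>R ((\<chi> i. if i = j then 1 else 0)::real^'m)) $ i = (h x *\<^sub>R (\<chi> j. g j y)) $ i"
        by simp
    qed
  qed
  ultimately show ?thesis by simp
qed

context hlc
begin

lemma weak_nbhd:
  assumes V: "compactin T V" and u: "u \<in> V" and W: "openin T W" "u \<in> W"
  shows "\<exists>F. finite F \<and> F \<subseteq> tvs_dual T \<and> (\<forall>x\<in>V. (\<forall>f\<in>F. \<bar>f x - f u\<bar> < 1) \<longrightarrow> x \<in> W)"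
proof -
  define C where "C = (topspace T - W) \<inter> V"
  have C: "compactin T C" unfolding C_def
    by (rule closed_Int_compactin[OF _ V]) (use W in auto)
  have ex: "\<exists>g. g \<in> tvs_dual T \<and> \<bar>g v - g u\<bar> = 2" if "v \<in> C" for v
  proof -
    have "v \<noteq> u" using that W C_def by auto
    then obtain f where f: "f \<in> tvs_dual T" "f v \<noteq> f u" using sep by blast
    define r where "r = \<bar>f v - f u\<bar>"
    have r: "r > 0" using f r_def by simp
    have "(\<lambda>x. (2/r) * f x) \<in> tvs_dual T" by (rule dual_scale[OF f(1)])
    moreover have "\<bar>(2/r) * f v - (2/r) * f u\<bar> = 2"
    proof -
      have r_abs: "\<bar>f v - f u\<bar> = r" by (simp add: r_def)
      have "(2/r) * f v - (2/r) * f u = (2/r) * (f v - f u)" by (simp only: right_diff_distrib)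
      also have "\<bar>\<dots>\<bar> = \<bar>2/r\<bar> * \<bar>f v - f u\<bar>" by (rule abs_mult)
      also have "\<dots> = (2/r) * r" using r r_abs by simp
      also have "\<dots> = 2" using r by simp
      finally show ?thesis .
    qed
    ultimately show ?thesis by blast
  qed
  define gv where "gv v = (SOME g. g \<in> tvs_dual T \<and> \<bar>g v - g u\<bar> = 2)" for v
  have gv: "gv v \<in> tvs_dual T" "\<bar>gv v v - gv v u\<bar> = 2" if "v \<in> C" for v
    using someI_ex[OF ex[OF that]] unfolding gv_def by blast+
  define Bs where "Bs v = {x. 1 < \<bar>gv v x - gv v u\<bar>}" for v
  have Bopen: "openin T (Bs v)" if "v \<in> C" for v
  proof -
    have "continuous_map T euclideanreal (\<lambda>x. \<bar>gv v x - gv v u\<bar>)"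
      using gv(1)[OF that] unfolding tvs_dual_def by (intro continuous_intros) auto
    then have "openin T {x \<in> topspace T. \<bar>gv v x - gv v u\<bar> \<in> {1<..}}"
      by (rule openin_continuous_map_preimage) simp
    then show ?thesis by (simp add: Bs_def top)
  qed
  have "C \<subseteq> \<Union>(Bs ` C)" using gv(2) Bs_def by fastforce
  then obtain \<F> where F: "finite \<F>" "\<F> \<subseteq> Bs ` C" "C \<subseteq> \<Union>\<F>"
    using C Bopen unfolding compactin_def by (metis (no_types, lifting) imageE)
  obtain C0 where C0: "C0 \<subseteq> C" "finite C0" "\<F> = Bs ` C0"
    using finite_subset_image[OF F(1) F(2)] by blast
  show ?thesis
  proof (intro exI conjI ballI impI)
    show "finite (gv ` C0)" using C0 by simp
    show "gv ` C0 \<subseteq> tvs_dual T" using C0 gv by auto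
    fix x assume x: "x \<in> V" and small: "\<forall>f\<in>gv ` C0. \<bar>f x - f u\<bar> < 1"
    show "x \<in> W"
    proof (rule ccontr)
      assume "x \<notin> W"
      then have "x \<in> C" using x C_def top by auto
      then obtain v where "v \<in> C0" "x \<in> Bs v" using F(3) C0(3) by auto
      then show False using small Bs_def by force
    qed
  qed
qed

end


lemma coord_cont [continuous_intros]: "continuous_on A (\<lambda>z::'i\<Rightarrow>real. z j)"
  using continuous_on_product_then_coordinatewise[of A "\<lambda>z. z" j] by simp

theorem mainTheorem3:
  fixes T :: "'a::real_vector topology"
    and V :: "'a set"
    and K :: "(real^'d) set"
    and G :: "'a \<Rightarrow> real^'d \<Rightarrow> real^'m"
    and \<sigma> :: "real \<Rightarrow> real"
    and \<epsilon> :: real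
  assumes X: "hlc_tvs T"
    and V: "compactin T V"
    and K: "compact K"
    and G_vals: "\<forall>u\<in>V. continuous_on K (G u)"
    and G_cont: "\<forall>u\<in>V. \<forall>e>0. \<exists>W. openin T W \<and> u \<in> W \<and>
                    (\<forall>v\<in>V \<inter> W. \<forall>y\<in>K. norm (G v y - G u y) \<le> e)"
    and \<sigma>_cont: "continuous_on UNIV \<sigma>"
    and \<sigma>_TW: "tauber_wiener \<sigma>"
    and \<epsilon>: "\<epsilon> > 0"
  shows "\<exists>p::nat. p \<ge> 1 \<and>
           (\<exists>(\<omega> :: nat \<Rightarrow> real^'d) (\<zeta> :: nat \<Rightarrow> real) (b :: nat \<Rightarrow> 'a \<Rightarrow> real^'m).
              (\<forall>k<p. topo_nn T \<sigma> (b k)) \<and>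
              (\<exists>c<\<epsilon>. \<forall>u\<in>V. \<forall>y\<in>K.
                 norm (G u y - (\<Sum>k<p. \<sigma> (\<omega> k \<bullet> y + \<zeta> k) *\<^sub>R b k u)) \<le> c))"
proof -
  interpret hlc T by (rule hlc.intro[OF X])
  define D where "D = tvs_dual T"
  define e1 where "e1 = \<epsilon>/4"
  have e1: "e1 > 0" using \<epsilon> e1_def by simp
  have "\<forall>u\<in>V. \<exists>W. openin T W \<and> u \<in> W \<and> (\<forall>v\<in>V \<inter> W. \<forall>y\<in>K. norm (G v y - G u y) \<le> e1)"
    using G_cont e1 by blast
  then obtain Wf where Wf: "\<And>u. u\<in>V \<Longrightarrow> openin T (Wf u) \<and> u \<in> Wf u \<and> (\<forall>v\<in>V \<inter> Wf u. \<forall>y\<in>K. norm (G v y - G u y) \<le> e1)"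
    by metis
  have "\<forall>u\<in>V. \<exists>F. finite F \<and> F \<subseteq> D \<and> (\<forall>x\<in>V. (\<forall>f\<in>F. \<bar>f x - f u\<bar> < 1) \<longrightarrow> x \<in> Wf u)"
    using weak_nbhd[OF V] Wf unfolding D_def by blast
  then obtain Ff where Ff: "\<And>u. u\<in>V \<Longrightarrow> finite (Ff u) \<and> Ff u \<subseteq> D \<and> (\<forall>x\<in>V. (\<forall>f\<in>Ff u. \<bar>f x - f u\<bar> < 1) \<longrightarrow> x \<in> Wf u)"
    by metis
  define Ou where "Ou u = {x. (\<Sum>f\<in>Ff u. \<bar>f x - f u\<bar>) < 1}" for u
  have Ou_open: "openin T (Ou u)" if u: "u \<in> V" for u
  proof -
    have "continuous_map T euclideanreal (\<lambda>x. \<Sum>f\<in>Ff u. \<bar>f x - f u\<bar>)"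
    proof (intro continuous_map_sum continuous_map_real_abs continuous_map_diff)
      show "finite (Ff u)" using Ff[OF u] by blast
      fix f assume "f \<in> Ff u"
      then have "f \<in> D" using Ff[OF u] by blast
      then show "continuous_map T euclideanreal f" unfolding D_def tvs_dual_def by blast
    qed simp
    then have "openin T {x \<in> topspace T. (\<Sum>f\<in>Ff u. \<bar>f x - f u\<bar>) \<in> {..<1}}"
      by (rule openin_continuous_map_preimage) simp
    then show ?thesis by (simp add: Ou_def top)
  qed
  have "V \<subseteq> \<Union>(Ou ` V)" by (auto simp: Ou_def)
  then obtain \<F> where \<F>: "finite \<F>" "\<F> \<subseteq> Ou ` V" "V \<subseteq> \<Union>\<F>"
    using V Ou_open unfolding compactin_def by (metis (no_types, lifting) imageE)
  obtain U0 where U0: "U0 \<subseteq> V" "finite U0" "\<F> = Ou ` U0"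
    using finite_subset_image[OF \<F>(1) \<F>(2)] by blast
  have Vcov: "\<exists>u\<in>U0. x \<in> Ou u" if "x \<in> V" for x using \<F>(3) U0(3) that by auto
  define FF where "FF = \<Union>(Ff ` U0)"
  have FF: "finite FF" "FF \<subseteq> D" using Ff U0 unfolding FF_def by auto
  define n where "n = card FF"
  obtain fe where fe: "bij_betw fe {0..<n} FF" using ex_bij_betw_nat_finite[OF FF(1)] n_def by blast
  have feD: "fe j \<in> D" if "j < n" for j using fe FF(2) that unfolding bij_betw_def by auto
  define \<Phi> where "\<Phi> x = (\<lambda>j. if j < n then fe j x else 0)" for x
  define S where "S = \<Phi> ` V"
  have cS: "compact S"
  proof -
    have "continuous_map T euclidean \<Phi>"
      unfolding euclidean_product_topology[symmetric] continuous_map_componentwise_UNIV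
    proof
      fix j
      show "continuous_map T euclideanreal (\<lambda>x. \<Phi> x j)"
      proof (cases "j < n")
        case True
        then show ?thesis using feD[OF True] unfolding \<Phi>_def D_def tvs_dual_def by simp
      next
        case False
        then show ?thesis unfolding \<Phi>_def by simp
      qed
    qed
    from image_compactin[OF V this] show ?thesis unfolding S_def by simp
  qed
  define J where "J u = {j. j < n \<and> fe j \<in> Ff u}" for u
  define \<Psi> where "\<Psi> u z = max 0 (1 - (\<Sum>j\<in>J u. \<bar>z j - \<Phi> u j\<bar>))" for u and z :: "nat \<Rightarrow> real"
  have \<Psi>\<Phi>: "\<Psi> u (\<Phi> x) = max 0 (1 - (\<Sum>f\<in>Ff u. \<bar>f x - f u\<bar>))" if u: "u \<in> U0" for u x
  proof -
    have sub: "Ff u \<subseteq> FF" using u FF_def by auto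
    have bJ: "bij_betw fe (J u) (Ff u)"
    proof (rule bij_betw_subset[OF fe])
      show "J u \<subseteq> {0..<n}" by (auto simp: J_def)
      show "fe ` J u = Ff u"
      proof
        show "fe ` J u \<subseteq> Ff u" by (auto simp: J_def)
        show "Ff u \<subseteq> fe ` J u"
        proof
          fix f assume f: "f \<in> Ff u"
          then have "f \<in> fe ` {0..<n}" using sub fe unfolding bij_betw_def by auto
          then obtain j where "j < n" "f = fe j" by auto
          then show "f \<in> fe ` J u" using f J_def by auto
        qed
      qed
    qed
    have "(\<Sum>j\<in>J u. \<bar>\<Phi> x j - \<Phi> u j\<bar>) = (\<Sum>j\<in>J u. \<bar>fe j x - fe j u\<bar>)"
      by (rule sum.cong) (auto simp: J_def \<Phi>_def)
    also have "\<dots> = (\<Sum>f\<in>Ff u. \<bar>f x - f u\<bar>)"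
      by (rule sum.reindex_bij_betw[OF bJ, of "\<lambda>f. \<bar>f x - f u\<bar>"])
    finally show ?thesis unfolding \<Psi>_def by simp
  qed
  define den where "den z = (\<Sum>u\<in>U0. \<Psi> u z)" for z
  define a where "a u z = \<Psi> u z / den z" for u z
  have \<Psi>_nonneg: "0 \<le> \<Psi> u z" for u z unfolding \<Psi>_def by simp
  have den_pos: "den (\<Phi> x) > 0" if x: "x \<in> V" for x
  proof -
    obtain u where u: "u \<in> U0" "x \<in> Ou u" using Vcov[OF x] by blast
    have "\<Psi> u (\<Phi> x) > 0" using u \<Psi>\<Phi>[OF u(1)] Ou_def by simp
    then show ?thesis unfolding den_def
      by (intro sum_pos2[OF U0(2) u(1)]) (auto simp: \<Psi>_nonneg)
  qed
  have den_posS: "den z > 0" if "z \<in> S" for z using den_pos that S_def by auto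
  have a_cont: "continuous_on S (a u)" for u
  proof -
    have c\<Psi>: "continuous_on S (\<Psi> v)" for v
      unfolding \<Psi>_def by (intro continuous_intros)
    have "continuous_on S (\<lambda>z. \<Psi> u z / den z)"
      unfolding den_def using den_posS unfolding den_def
      by (intro continuous_intros c\<Psi>) (auto, metis less_irrefl)
    then show ?thesis unfolding a_def .
  qed
  have a_sum: "(\<Sum>u\<in>U0. a u (\<Phi> x)) = 1" if x: "x \<in> V" for x
    using den_pos[OF x] unfolding a_def by (simp add: sum_divide_distrib[symmetric] den_def)
  have a_nonneg: "0 \<le> a u (\<Phi> x)" if x: "x \<in> V" for x u
    using den_pos[OF x] \<Psi>_nonneg unfolding a_def by simp
  have a_le1: "a u (\<Phi> x) \<le> 1" if x: "x \<in> V" and u: "u \<in> U0" for x u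
  proof -
    have "a u (\<Phi> x) \<le> (\<Sum>v\<in>U0. a v (\<Phi> x))"
      by (rule member_le_sum[OF u _ U0(2)]) (use a_nonneg[OF x] in auto)
    then show ?thesis using a_sum[OF x] by simp
  qed
  have a_pos_W: "\<forall>y\<in>K. norm (G x y - G u y) \<le> e1"
    if u: "u \<in> U0" and x: "x \<in> V" and pos: "a u (\<Phi> x) > 0" for u x
  proof -
    have uV: "u \<in> V" using u U0 by auto
    have "\<Psi> u (\<Phi> x) > 0" using pos den_pos[OF x] unfolding a_def by (simp add: zero_less_divide_iff)
    then have lt: "(\<Sum>f\<in>Ff u. \<bar>f x - f u\<bar>) < 1" using \<Psi>\<Phi>[OF u] by simp
    have "\<forall>f\<in>Ff u. \<bar>f x - f u\<bar> < 1"
    proof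
      fix f assume f: "f \<in> Ff u"
      have "\<bar>f x - f u\<bar> \<le> (\<Sum>f\<in>Ff u. \<bar>f x - f u\<bar>)"
        by (rule member_le_sum[OF f]) (use Ff[OF uV] in auto)
      then show "\<bar>f x - f u\<bar> < 1" using lt by simp
    qed
    then have "x \<in> Wf u" using Ff[OF uV] x by blast
    then show ?thesis using Wf[OF uV] x by blast
  qed

  define LS where "LS = {l. \<exists>w. l = (\<lambda>z::nat\<Rightarrow>real. \<Sum>j<n. w j * z j)}"
  interpret LS: lin_family LS S
  proof
    show "compact S" by (rule cS)
    fix l assume "l \<in> LS"
    then obtain w where "l = (\<lambda>z::nat\<Rightarrow>real. \<Sum>j<n. w j * z j)" unfolding LS_def by blast
    then show "continuous_on S l" by (simp add: continuous_intros)
  next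
    show "(\<lambda>z. 0) \<in> LS" unfolding LS_def by (rule CollectI, rule exI[of _ "\<lambda>_. 0"]) simp
  next
    fix l1 l2 assume "l1 \<in> LS" "l2 \<in> LS"
    then obtain w1 w2 where "l1 = (\<lambda>z::nat\<Rightarrow>real. \<Sum>j<n. w1 j * z j)" "l2 = (\<lambda>z::nat\<Rightarrow>real. \<Sum>j<n. w2 j * z j)"
      unfolding LS_def by blast
    then show "(\<lambda>z. l1 z + l2 z) \<in> LS" unfolding LS_def
      by (intro CollectI exI[of _ "\<lambda>j. w1 j + w2 j"]) (simp add: sum.distrib distrib_right)
  next
    fix l c assume "l \<in> LS"
    then obtain w where "l = (\<lambda>z::nat\<Rightarrow>real. \<Sum>j<n. w j * z j)" unfolding LS_def by blast
    then show "(\<lambda>z. c * l z) \<in> LS" unfolding LS_def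
      by (intro CollectI exI[of _ "\<lambda>j. c * w j"]) (simp add: sum_distrib_left mult.assoc)
  next
    fix z1 z2 assume z: "z1 \<in> S" "z2 \<in> S" "z1 \<noteq> z2"
    then obtain j where j: "z1 j \<noteq> z2 j" by (meson ext)
    have jn: "j < n"
    proof (rule ccontr)
      assume "\<not> j < n"
      then have "z1 j = 0" "z2 j = 0" using z(1,2) unfolding S_def \<Phi>_def by auto
      then show False using j by simp
    qed
    define l where "l = (\<lambda>z::nat\<Rightarrow>real. \<Sum>i<n. (\<lambda>i. if i = j then 1 else 0) i * z i)"
    have "l \<in> LS" unfolding LS_def l_def by (intro CollectI exI[of _ "\<lambda>i. if i = j then 1 else 0"]) simp
    moreover have "l z = z j" for z
    proof -
      have "l z = (\<Sum>i<n. if i = j then z i else 0)" unfolding l_def by (rule sum.cong) auto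
      then show ?thesis using jn by simp
    qed
    ultimately show "\<exists>l\<in>LS. l z1 \<noteq> l z2" using j by metis
  qed
  define LK where "LK = {l. \<exists>\<omega>::real^'d. l = (\<lambda>y. \<omega> \<bullet> y)}"
  interpret LK: lin_family LK K
  proof
    show "compact K" by (rule K)
    fix l assume "l \<in> LK"
    then obtain w where "l = (\<lambda>y. w \<bullet> y)" unfolding LK_def by blast
    then show "continuous_on K l" by (simp add: continuous_intros)
  next
    show "(\<lambda>z. 0) \<in> LK" unfolding LK_def by (intro CollectI exI[of _ 0]) (simp add: fun_eq_iff)
  next
    fix l1 l2 assume "l1 \<in> LK" "l2 \<in> LK"
    then obtain w1 w2 where "l1 = (\<lambda>y. w1 \<bullet> y)" "l2 = (\<lambda>y. w2 \<bullet> y)" unfolding LK_def by blast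
    then show "(\<lambda>z. l1 z + l2 z) \<in> LK" unfolding LK_def
      by (intro CollectI exI[of _ "w1 + w2"]) (simp add: inner_add_left fun_eq_iff)
  next
    fix l c assume "l \<in> LK"
    then obtain w where "l = (\<lambda>y. w \<bullet> y)" unfolding LK_def by blast
    then show "(\<lambda>z. c * l z) \<in> LK" unfolding LK_def
      by (intro CollectI exI[of _ "c *\<^sub>R w"]) (simp add: fun_eq_iff)
  next
    fix y1 y2 :: "real^'d" assume "y1 \<in> K" "y2 \<in> K" "y1 \<noteq> y2"
    then have "(y1 - y2) \<bullet> y1 - (y1 - y2) \<bullet> y2 \<noteq> 0" by (simp add: inner_diff_right[symmetric])
    moreover have "(\<lambda>y. (y1 - y2) \<bullet> y) \<in> LK" unfolding LK_def by (intro CollectI exI[of _ "y1 - y2"]) simp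
    ultimately show "\<exists>l\<in>LK. l y1 \<noteq> l y2" by (intro bexI[of _ "\<lambda>y. (y1 - y2) \<bullet> y"]) auto
  qed
  obtain B where B: "B > 0" "\<forall>u\<in>U0. \<forall>y\<in>K. norm (G u y) \<le> B"
  proof -
    have "compact (\<Union>u\<in>U0. G u ` K)"
      using U0 G_vals K by (intro compact_UN compact_continuous_image) auto
    then have "bounded (\<Union>u\<in>U0. G u ` K)" by (rule compact_imp_bounded)
    then obtain B where "B > 0" "\<forall>x\<in>(\<Union>u\<in>U0. G u ` K). norm x \<le> B" unfolding bounded_pos by blast
    then show ?thesis using that by blast
  qed
  define M where "M = card U0"
  define m where "m = CARD('m)"
  have m1: "real m \<ge> 1" unfolding m_def by simp
  define \<eta> where "\<eta> = min 1 (\<epsilon> / (8 * (M+1) * (B+1)))"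
  define \<eta>' where "\<eta>' = \<epsilon> / (16 * (M+1) * m)"
  have \<eta>: "\<eta> > 0" "\<eta> \<le> 1" "\<eta> \<le> \<epsilon> / (8 * (M+1) * (B+1))" using \<epsilon> B unfolding \<eta>_def by auto
  have \<eta>': "\<eta>' > 0" using \<epsilon> m1 unfolding \<eta>'_def by simp
  have "\<forall>u\<in>U0. \<exists>h. isnetD T \<sigma> h \<and> (\<forall>x\<in>V. \<bar>a u (\<Phi> x) - h x\<bar> < \<eta>)"
  proof
    fix u assume u: "u \<in> U0"
    obtain N c l \<theta> where A: "\<forall>i<(N::nat). l i \<in> LS" "\<forall>z\<in>S. \<bar>a u z - (\<Sum>i<N. c i * \<sigma> (l i z - \<theta> i))\<bar> < \<eta>"
      using LS.UA[OF \<sigma>_cont \<sigma>_TW a_cont \<eta>(1)] by blast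
    have "\<forall>i<N. \<exists>w. l i = (\<lambda>z::nat\<Rightarrow>real. \<Sum>j<n. w j * z j)" using A(1) unfolding LS_def by blast
    then obtain wf where wf: "\<And>i. i < N \<Longrightarrow> l i = (\<lambda>z::nat\<Rightarrow>real. \<Sum>j<n. wf i j * z j)" by metis
    define F where "F i x = (\<Sum>j<n. wf i j * fe j x)" for i x
    have FD: "F i \<in> tvs_dual T" for i
      unfolding F_def[abs_def] using dual_sum[of "{..<n}" fe T "wf i"] feD D_def by auto
    have lF: "l i (\<Phi> x) = F i x" if "i < N" for i x
      unfolding wf[OF that] F_def \<Phi>_def by (rule sum.cong) auto
    define h where "h x = (\<Sum>i<N. c i * \<sigma> (F i x - \<theta> i))" for x
    have "isnetD T \<sigma> h" unfolding isnetD_def h_def[abs_def] using FD by blast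
    moreover have "\<forall>x\<in>V. \<bar>a u (\<Phi> x) - h x\<bar> < \<eta>"
    proof
      fix x assume "x \<in> V"
      then have "\<Phi> x \<in> S" unfolding S_def by simp
      moreover have "(\<Sum>i<N. c i * \<sigma> (l i (\<Phi> x) - \<theta> i)) = h x"
        unfolding h_def by (rule sum.cong) (auto simp: lF)
      ultimately show "\<bar>a u (\<Phi> x) - h x\<bar> < \<eta>" using A(2) by metis
    qed
    ultimately show "\<exists>h. isnetD T \<sigma> h \<and> (\<forall>x\<in>V. \<bar>a u (\<Phi> x) - h x\<bar> < \<eta>)" by blast
  qed
  then obtain hh where hh: "\<And>u. u \<in> U0 \<Longrightarrow> isnetD T \<sigma> (hh u) \<and> (\<forall>x\<in>V. \<bar>a u (\<Phi> x) - hh u x\<bar> < \<eta>)"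
    by metis
  have "\<forall>u\<in>U0. \<forall>j. \<exists>g. isnetK \<sigma> g \<and> (\<forall>y\<in>K. \<bar>G u y $ j - g y\<bar> < \<eta>')"
  proof (intro ballI allI)
    fix u j assume u: "u \<in> U0"
    have gc: "continuous_on K (\<lambda>y. G u y $ j)"
      using G_vals u U0 by (intro continuous_on_component) auto
    obtain N c l \<theta> where A: "\<forall>i<(N::nat). l i \<in> LK" "\<forall>y\<in>K. \<bar>G u y $ j - (\<Sum>i<N. c i * \<sigma> (l i y - \<theta> i))\<bar> < \<eta>'"
      using LK.UA[OF \<sigma>_cont \<sigma>_TW gc \<eta>'] by blast
    have "\<forall>i<N. \<exists>w. l i = (\<lambda>y. w \<bullet> y)" using A(1) unfolding LK_def by blast
    then obtain wf where wf: "\<And>i. i < N \<Longrightarrow> l i = (\<lambda>y. wf i \<bullet> y)" by metis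
    define g where "g y = (\<Sum>i<N. c i * \<sigma> (wf i \<bullet> y + (- \<theta> i)))" for y
    have "isnetK \<sigma> g" unfolding isnetK_def g_def[abs_def] by (intro exI[of _ N] exI[of _ c] exI[of _ wf] exI[of _ "\<lambda>i. - \<theta> i"]) simp
    moreover have "\<forall>y\<in>K. \<bar>G u y $ j - g y\<bar> < \<eta>'"
    proof
      fix y assume y: "y \<in> K"
      have "(\<Sum>i<N. c i * \<sigma> (l i y - \<theta> i)) = g y"
        unfolding g_def by (rule sum.cong) (auto simp: wf)
      then show "\<bar>G u y $ j - g y\<bar> < \<eta>'" using A(2) y by metis
    qed
    ultimately show "\<exists>g. isnetK \<sigma> g \<and> (\<forall>y\<in>K. \<bar>G u y $ j - g y\<bar> < \<eta>')" by blast
  qed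
  then obtain gg where gg: "\<And>u j. u \<in> U0 \<Longrightarrow> isnetK \<sigma> (gg u j) \<and> (\<forall>y\<in>K. \<bar>G u y $ j - gg u j y\<bar> < \<eta>')"
    by metis
  define H where "H x y = (\<Sum>u\<in>U0. hh u x *\<^sub>R (\<chi> j. gg u j y))" for x y
  have "OKf T \<sigma> H"
    unfolding H_def by (intro OK_sum OK_vec) (use hh gg in auto)
  then obtain p \<omega> \<zeta> b where P: "(p::nat) \<ge> 1" "\<forall>k<p. topo_nn T \<sigma> (b k)"
    "\<forall>u y. H u y = (\<Sum>k<p. \<sigma> (\<omega> k \<bullet> y + \<zeta> k) *\<^sub>R b k u)"
    unfolding OKf_def by blast
  have bound: "norm (G x y - H x y) \<le> \<epsilon>/2" if x: "x \<in> V" and y: "y \<in> K" for x y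
  proof -
    define A where "A u = a u (\<Phi> x)" for u
    define gv where "gv u = (\<chi> j. gg u j y)" for u
    have sumA: "(\<Sum>u\<in>U0. A u) = 1" using a_sum[OF x] A_def by simp
    have part1: "norm (G x y - (\<Sum>u\<in>U0. A u *\<^sub>R G u y)) \<le> e1"
    proof -
      have "G x y - (\<Sum>u\<in>U0. A u *\<^sub>R G u y) = (\<Sum>u\<in>U0. A u *\<^sub>R (G x y - G u y))"
      proof -
        have "G x y = (\<Sum>u\<in>U0. A u) *\<^sub>R G x y" using sumA by simp
        also have "\<dots> = (\<Sum>u\<in>U0. A u *\<^sub>R G x y)" by (rule scaleR_sum_left)
        finally have "G x y = (\<Sum>u\<in>U0. A u *\<^sub>R G x y)" .
        then show ?thesis by (simp add: scaleR_diff_right sum_subtractf)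
      qed
      also have "norm \<dots> \<le> (\<Sum>u\<in>U0. norm (A u *\<^sub>R (G x y - G u y)))" by (rule norm_sum)
      also have "\<dots> \<le> (\<Sum>u\<in>U0. A u * e1)"
      proof (rule sum_mono)
        fix u assume u: "u \<in> U0"
        have A0: "0 \<le> A u" using a_nonneg[OF x] A_def by simp
        show "norm (A u *\<^sub>R (G x y - G u y)) \<le> A u * e1"
        proof (cases "A u > 0")
          case True
          then have "norm (G x y - G u y) \<le> e1" using a_pos_W[OF u x] y A_def by simp
          then show ?thesis using A0 by (simp add: mult_left_mono)
        next
          case False then have "A u = 0" using A0 by simp
          then show ?thesis by simp
        qed
      qed
      also have "\<dots> = e1" using sumA by (simp add: sum_distrib_right[symmetric])
      finally show ?thesis .
    qed
    have part2: "norm (A u *\<^sub>R G u y - hh u x *\<^sub>R gv u) \<le> \<eta> * B + 2 * (m * \<eta>')" if u: "u \<in> U0" for u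
    proof -
      have ah: "\<bar>A u - hh u x\<bar> < \<eta>" using hh[OF u] x A_def by simp
      have A01: "0 \<le> A u" "A u \<le> 1" using a_nonneg[OF x] a_le1[OF x u] A_def by auto
      have habs: "\<bar>hh u x\<bar> \<le> 2" using ah A01 \<eta>(2) by linarith
      have GB: "norm (G u y) \<le> B" using B u y by blast
      have Gg: "norm (G u y - gv u) \<le> m * \<eta>'"
      proof -
        have "norm (G u y - gv u) \<le> (\<Sum>j\<in>UNIV. \<bar>(G u y - gv u) $ j\<bar>)" by (rule norm_le_l1_cart)
        also have "\<dots> \<le> (\<Sum>j\<in>(UNIV::'m set). \<eta>')"
        proof (rule sum_mono)
          fix j :: 'm
          have "\<bar>G u y $ j - gg u j y\<bar> < \<eta>'" using gg[OF u] y by blast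
          then show "\<bar>(G u y - gv u) $ j\<bar> \<le> \<eta>'" by (simp add: gv_def)
        qed
        also have "\<dots> = m * \<eta>'" by (simp add: m_def)
        finally show ?thesis .
      qed
      have eq: "A u *\<^sub>R G u y - hh u x *\<^sub>R gv u = (A u - hh u x) *\<^sub>R G u y + hh u x *\<^sub>R (G u y - gv u)"
        by (simp add: algebra_simps)
      have "norm (A u *\<^sub>R G u y - hh u x *\<^sub>R gv u) \<le> norm ((A u - hh u x) *\<^sub>R G u y) + norm (hh u x *\<^sub>R (G u y - gv u))"
        unfolding eq by (rule norm_triangle_ineq)
      also have "\<dots> = \<bar>A u - hh u x\<bar> * norm (G u y) + \<bar>hh u x\<bar> * norm (G u y - gv u)" by simp
      also have "\<dots> \<le> \<eta> * B + 2 * (m * \<eta>')"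
        by (intro add_mono mult_mono) (use ah GB habs Gg in auto)
      finally show ?thesis .
    qed
    have HH: "H x y = (\<Sum>u\<in>U0. hh u x *\<^sub>R gv u)" using H_def gv_def by simp
    have eqGH: "G x y - H x y = (G x y - (\<Sum>u\<in>U0. A u *\<^sub>R G u y)) + (\<Sum>u\<in>U0. (A u *\<^sub>R G u y - hh u x *\<^sub>R gv u))"
      by (simp add: HH sum_subtractf)
    have "norm (G x y - H x y) \<le> norm (G x y - (\<Sum>u\<in>U0. A u *\<^sub>R G u y)) + norm (\<Sum>u\<in>U0. (A u *\<^sub>R G u y - hh u x *\<^sub>R gv u))"
      unfolding eqGH by (rule norm_triangle_ineq)
    also have "\<dots> \<le> e1 + (\<Sum>u\<in>U0. (\<eta> * B + 2 * (m * \<eta>')))"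
      by (intro add_mono part1 order_trans[OF norm_sum] sum_mono part2)
    also have "\<dots> = e1 + M * (\<eta> * B + 2 * (m * \<eta>'))" by (simp add: M_def)
    also have "\<dots> \<le> \<epsilon>/2"
    proof -
      have Bp: "B \<ge> 0" using B by simp
      have "\<eta> * B \<le> \<eta> * (B+1)" using \<eta>(1) by simp
      then have "M * (\<eta> * B) \<le> (M+1) * (\<eta> * (B+1))"
        using \<eta>(1) Bp by (intro mult_mono) auto
      also have "\<dots> \<le> (M+1) * ((\<epsilon> / (8 * (M+1) * (B+1))) * (B+1))"
        using \<eta>(3) Bp by (intro mult_left_mono mult_right_mono) auto
      also have "\<dots> = \<epsilon>/8"
      proof -
        have p1: "real M + 1 \<noteq> 0" "B + 1 \<noteq> 0" using Bp by linarith+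
        have aux: "a * ((e / (8 * a * b)) * b) = e/8" if "a \<noteq> 0" "b \<noteq> 0" for a b e :: real
          using that by (simp add: field_simps)
        have c1: "real (8 * (M + 1)) = 8 * real (M + 1)" by simp
        have p2: "real (M + 1) \<noteq> 0" by simp
        show ?thesis unfolding c1 by (rule aux[OF p2 p1(2)])
      qed
      finally have 1: "M * (\<eta> * B) \<le> \<epsilon>/8" .
      have aux2: "x * (2 * (c * (e / (16 * (x+1) * c)))) \<le> e/8" if "0 \<le> x" "0 < c" "0 < e" for x c e :: real
      proof -
        have nz: "x + 1 \<noteq> 0" "1 + x \<noteq> 0" "c \<noteq> 0" using that by auto
        have "c * (e / (16 * (x+1) * c)) = e / (16 * (x+1))" using that by simp
        moreover have "x * (2 * (e / (16 * (x+1)))) = (x/(x+1)) * (e/8)"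
          by (simp add: divide_simps)
        ultimately have "x * (2 * (c * (e / (16 * (x+1) * c)))) = (x/(x+1)) * (e/8)" by simp
        also have "\<dots> \<le> 1 * (e/8)" using that nz by (intro mult_right_mono) (auto simp: divide_le_eq_1)
        finally show ?thesis by simp
      qed
      have c2: "\<eta>' = \<epsilon> / (16 * (real M + 1) * real m)" unfolding \<eta>'_def by simp
      have 2: "M * (2 * (m * \<eta>')) \<le> \<epsilon>/8" unfolding c2 by (rule aux2) (use m1 \<epsilon> in auto)
      show ?thesis using 1 2 e1_def by (simp add: distrib_left)
    qed
    finally show ?thesis .
  qed
  show ?thesis
    by (rule exI[of _ p], rule conjI[OF P(1)], rule exI[of _ \<omega>], rule exI[of _ \<zeta>], rule exI[of _ b],
        rule conjI[OF P(2)], rule exI[of _ "\<epsilon>/2"]) (use bound P(3) \<epsilon> in auto)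
qed

end
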